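(* Setting: $n$ agents on a connected, undirected weighted graph with Laplacian $L_n$; $L=L_n\otimes I_m$. For each $i$, $\Omega_i\subset\mathbb R^{q_i}$ is closed and convex, $f^i$ is strictly convex on an open set containing $\Omega_i$, $W_i\in\mathbb R^{m\times q_i}$, $d_i\in\mathbb R^m$ with $\sum_id_i=d_0$; $\Omega=\prod_i\Omega_i$, $f(x)=\sum_if^i(x_i)$, $W=[W_1,\dots,W_n]$, $\overline W=\mathrm{diag}\{W_1,\dots,W_n\}$, $d=[d_1^{\rm T},\dots,d_n^{\rm T}]^{\rm T}$; Slater's condition holds (some $x$ in the interior of $\Omega$ has $Wx=d_0$). Let $(x^*,\lambda^*,z^* )\in\Omega\times\mathbb R^{nm}\times\mathbb R^{nm}$ be an equilibrium of the DDFA inclusion, i.e. there is $g\in\partial f(x^* )$ with $P_\Omega[x^*-g+\overline W^{\rm T}\lambda^*]=x^*$, $d-\overline Wx^*-Lz^*=0$, $L\lambda^*=0$. Define $$V(x,\lambda,z)=f(x)-f(x^* )+(\lambda^* )^{\rm T}(d-\overline Wx)+\tfrac12\|x-x^*\|^2+\tfrac12\|\lambda-\lambda^*\|^2+\tfrac12\|z-z^*\|^2.$$ Then on $\Omega\times\mathbb R^{nm}\times\mathbb R^{nm}$, $V$ is positive definite: $V\ge0$, $V(x,\lambda,z)=0$ if and only if $(x,\lambda,z)=(x^*,\lambda^*,z^* )$, and $V(x,\lambda,z)\to\infty$ as $\|(x,\lambda,z)\|\to\infty$.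
   Context: $\partial f$ is the convex subdifferential; $P_\Omega$ the Euclidean projection onto $\Omega$. *)

theory Defs
  imports "HOL-Analysis.Analysis"
begin

definition strict_convex_on :: "'a::real_vector set \<Rightarrow> ('a \<Rightarrow> real) \<Rightarrow> bool" where
  "strict_convex_on S f \<longleftrightarrow> convex S \<and>
     (\<forall>x\<in>S. \<forall>y\<in>S. x \<noteq> y \<longrightarrow> (\<forall>u::real. 0 < u \<and> u < 1 \<longrightarrow>
        f ((1 - u) *\<^sub>R x + u *\<^sub>R y) < (1 - u) * f x + u * f y))"

definition subdifferential :: "('a::real_inner \<Rightarrow> real) \<Rightarrow> 'a set \<Rightarrow> 'a \<Rightarrow> 'a set" where
  "subdifferential f D x = {g. \<forall>y\<in>D. f y \<ge> f x + inner g (y - x)}"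

text \<open>Stacked decision vectors live in real^'N; coordinate p belongs to agent blk p.
  The block space of agent i (a copy of R^(q_i)) and the block projection x |-> x_i.\<close>
definition blockspace :: "('N::finite \<Rightarrow> 'n) \<Rightarrow> 'n \<Rightarrow> (real^'N) set" where
  "blockspace blk i = {v. \<forall>p. blk p \<noteq> i \<longrightarrow> v $ p = 0}"

definition blockproj :: "('N::finite \<Rightarrow> 'n) \<Rightarrow> 'n \<Rightarrow> real^'N \<Rightarrow> real^'N" where
  "blockproj blk i x = (\<chi> p. if blk p = i then x $ p else 0)"

definition connected_weighted_graph :: "('n::finite \<Rightarrow> 'n \<Rightarrow> real) \<Rightarrow> bool" where
  "connected_weighted_graph a \<longleftrightarrow>
     (\<forall>i j. a i j = a j i) \<and> (\<forall>i j. a i j \<ge> 0) \<and> (\<forall>i. a i i = 0) \<and>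
     (\<forall>i j. (\<lambda>u v. a u v > 0)\<^sup>*\<^sup>* i j)"

definition graph_laplacian :: "('n::finite \<Rightarrow> 'n \<Rightarrow> real) \<Rightarrow> real^'n^'n" where
  "graph_laplacian a = (\<chi> i j. (if i = j then (\<Sum>k\<in>UNIV. a i k) else 0) - a i j)"

text \<open>Kronecker product  Lap \<otimes> I_m  acting on R^(nm), indexed by pairs (agent, component).\<close>
definition kron_id :: "real^'n^'n \<Rightarrow> real^('n::finite \<times> 'm::finite)^('n \<times> 'm)" where
  "kron_id Lap = (\<chi> p q. Lap $ fst p $ fst q * (if snd p = snd q then 1 else 0))"

text \<open>Block-diagonal matrix diag{W_1,...,W_n}: W i k p is entry (k,p) of W_i (only p with blk p = i used).\<close>
definition Wbar :: "('N::finite \<Rightarrow> 'n::finite) \<Rightarrow> ('n \<Rightarrow> 'm::finite \<Rightarrow> 'N \<Rightarrow> real)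
                    \<Rightarrow> real^'N^('n \<times> 'm)" where
  "Wbar blk W = (\<chi> r p. if blk p = fst r then W (fst r) (snd r) p else 0)"

definition Wrow :: "('N::finite \<Rightarrow> 'n::finite) \<Rightarrow> ('n \<Rightarrow> 'm::finite \<Rightarrow> 'N \<Rightarrow> real)
                    \<Rightarrow> real^'N \<Rightarrow> real^'m" where
  "Wrow blk W x = (\<chi> k. \<Sum>p\<in>UNIV. W (blk p) k p * x $ p)"

definition dsum :: "real^('n::finite \<times> 'm::finite) \<Rightarrow> real^'m" where
  "dsum d = (\<chi> k. \<Sum>i\<in>UNIV. d $ (i, k))"

end

theory Submission
  imports Defs
begin

lemma lin3_aux:
  fixes a1 a2 a3 b1 b2 b3 c1 c2 c3 :: real
  assumes "a1 \<le> 2*b1 + 2*c1" "a2 \<le> 2*b2 + 2*c2" "a3 \<le> 2*b3 + 2*c3"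
  shows "a1 + a2 + a3 \<le> 2*(b1 + b2 + b3) + 2*(c1 + c2 + c3)"
  using assms unfolding distrib_left by linarith

lemma fin_aux:
  fixes B C N S Vv :: real
  assumes "4*\<bar>B\<bar> + 2*C \<le> N" "N \<le> 2*S + 2*C" "(1/2)*S \<le> Vv"
  shows "B \<le> Vv"
  using assms unfolding distrib_left by linarith

theorem lemma7:
  fixes a :: "'n::finite \<Rightarrow> 'n \<Rightarrow> real"
    and blk :: "'N::finite \<Rightarrow> 'n"
    and Om :: "'n \<Rightarrow> (real^'N) set"
    and U :: "'n \<Rightarrow> (real^'N) set"
    and fi :: "'n \<Rightarrow> real^'N \<Rightarrow> real"
    and W :: "'n \<Rightarrow> 'm::finite \<Rightarrow> 'N \<Rightarrow> real"
    and d :: "real^('n \<times> 'm)"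
    and d0 :: "real^'m"
    and Omega D :: "(real^'N) set"
    and f :: "real^'N \<Rightarrow> real"
    and L :: "real^('n \<times> 'm)^('n \<times> 'm)"
    and xs x g :: "real^'N"
    and lams zs lam z :: "real^('n \<times> 'm)"
    and V :: "real^'N \<Rightarrow> real^('n \<times> 'm) \<Rightarrow> real^('n \<times> 'm) \<Rightarrow> real"
  assumes graph: "connected_weighted_graph a"
    and L_def: "L = kron_id (graph_laplacian a)"
    and blk_surj: "surj blk"
    and Om_sub: "\<And>i. Om i \<subseteq> blockspace blk i"
    and Om_closed: "\<And>i. closed (Om i)"
    and Om_convex: "\<And>i. convex (Om i)"
    and U_open: "\<And>i. openin (top_of_set (blockspace blk i)) (U i)"
    and U_sup: "\<And>i. Om i \<subseteq> U i"
    and fi_strict: "\<And>i. strict_convex_on (U i) (fi i)"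
    and d0_def: "d0 = dsum d"
    and Omega_def: "Omega = {x. \<forall>i. blockproj blk i x \<in> Om i}"
    and D_def: "D = {x. \<forall>i. blockproj blk i x \<in> U i}"
    and f_def: "\<And>x. f x = (\<Sum>i\<in>UNIV. fi i (blockproj blk i x))"
    and slater: "\<exists>x\<in>interior Omega. Wrow blk W x = d0"
    and xs_in: "xs \<in> Omega"
    and g_sub: "g \<in> subdifferential f D xs"
    and eq1: "closest_point Omega (xs - g + transpose (Wbar blk W) *v lams) = xs"
    and eq2: "d - Wbar blk W *v xs - L *v zs = 0"
    and eq3: "L *v lams = 0"
    and V_def: "\<And>x lam z. V x lam z = f x - f xs + inner lams (d - Wbar blk W *v x)
        + (1/2) * (norm (x - xs))\<^sup>2 + (1/2) * (norm (lam - lams))\<^sup>2 + (1/2) * (norm (z - zs))\<^sup>2"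
  shows "(\<forall>x\<in>Omega. \<forall>lam z. V x lam z \<ge> 0)
       \<and> (\<forall>x\<in>Omega. \<forall>lam z. V x lam z = 0 \<longleftrightarrow> (x, lam, z) = (xs, lams, zs))
       \<and> (\<forall>B. \<exists>R. \<forall>x\<in>Omega. \<forall>lam z. norm (x, lam, z) \<ge> R \<longrightarrow> V x lam z \<ge> B)"
proof -
  let ?Wb = "Wbar blk W"
  let ?h = "transpose ?Wb *v lams"
  have lin: "\<And>i. linear (blockproj blk i)"
    by (auto simp: linear_iff blockproj_def vec_eq_iff)
  have Om_eq: "Omega = (\<Inter>i. blockproj blk i -` Om i)"
    using Omega_def by auto
  have clo: "closed Omega"
    unfolding Om_eq
    using lin Om_closed
    by (intro closed_INT ballI continuous_closed_vimage)
       (metis linear_continuous_at linear_conv_bounded_linear)+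
  have cvx: "convex Omega"
    unfolding Om_eq
    by (intro convex_INT ballI convex_linear_vimage Om_convex lin)
  have OD: "Omega \<subseteq> D" using Omega_def D_def U_sup by blast
  have symL: "transpose L = L"
    using graph unfolding L_def kron_id_def graph_laplacian_def transpose_def connected_weighted_graph_def
    by (auto simp: vec_eq_iff intro!: sum.cong)
  have Lz0: "inner lams (L *v zs) = 0"
  proof -
    have "inner lams (L *v zs) = inner (lams v* L) zs" by (simp add: dot_lmul_matrix)
    also have "\<dots> = inner (transpose L *v lams) zs" by simp
    also have "\<dots> = 0" using symL eq3 by simp
    finally show ?thesis .
  qed
  have dxs: "d - ?Wb *v xs = L *v zs" using eq2 by (simp add: algebra_simps)
  have Qnn: "f x - f xs + inner lams (d - ?Wb *v x) \<ge> 0" if xO: "x \<in> Omega" for x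
  proof -
    have "inner (xs - g + ?h - xs) (x - xs) \<le> 0"
      using closest_point_dot[OF cvx clo xO, of "xs - g + ?h"] eq1 by simp
    hence 1: "inner ?h (x - xs) \<le> inner g (x - xs)" by (simp add: inner_diff_left)
    have 2: "f x \<ge> f xs + inner g (x - xs)"
      using g_sub OD xO unfolding subdifferential_def by blast
    have 3: "inner lams (?Wb *v (x - xs)) = inner ?h (x - xs)"
      by (simp add: dot_lmul_matrix)
    have "inner lams (d - ?Wb *v x) = inner lams (d - ?Wb *v xs) - inner lams (?Wb *v (x - xs))"
      by (simp add: matrix_vector_mult_diff_distrib inner_diff_right)
    also have "\<dots> = - inner ?h (x - xs)" using dxs Lz0 3 by simp
    finally show ?thesis using 1 2 by linarith
  qed
  have Vge: "V x lam z \<ge> (1/2) * ((norm (x - xs))\<^sup>2 + (norm (lam - lams))\<^sup>2 + (norm (z - zs))\<^sup>2)"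
    if "x \<in> Omega" for x lam z
    using Qnn[OF that] V_def[of x lam z] by simp
  have P1: "\<forall>x\<in>Omega. \<forall>lam z. V x lam z \<ge> 0"
  proof (intro ballI allI)
    fix x lam z assume "x \<in> Omega"
    have "0 \<le> (norm (x - xs))\<^sup>2" "0 \<le> (norm (lam - lams))\<^sup>2" "0 \<le> (norm (z - zs))\<^sup>2" by simp_all
    hence "0 \<le> (1/2::real) * ((norm (x - xs))\<^sup>2 + (norm (lam - lams))\<^sup>2 + (norm (z - zs))\<^sup>2)" by simp
    with Vge[OF \<open>x \<in> Omega\<close>, of lam z] show "V x lam z \<ge> 0" by (metis order_trans)
  qed
  have P2: "\<forall>x\<in>Omega. \<forall>lam z. V x lam z = 0 \<longleftrightarrow> (x, lam, z) = (xs, lams, zs)"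
  proof (intro ballI allI iffI)
    fix x lam z assume xO: "x \<in> Omega" and v0: "V x lam z = 0"
    from Vge[OF xO, of lam z] v0 have
      "(norm (x - xs))\<^sup>2 + (norm (lam - lams))\<^sup>2 + (norm (z - zs))\<^sup>2 \<le> 0" by simp
    moreover have "0 \<le> (norm (x - xs))\<^sup>2" "0 \<le> (norm (lam - lams))\<^sup>2" "0 \<le> (norm (z - zs))\<^sup>2" by simp_all
    ultimately have "(norm (x - xs))\<^sup>2 = 0 \<and> (norm (lam - lams))\<^sup>2 = 0 \<and> (norm (z - zs))\<^sup>2 = 0"
      by linarith
    thus "(x, lam, z) = (xs, lams, zs)" by simp
  next
    fix x lam z assume "x \<in> Omega" "(x, lam, z) = (xs, lams, zs)"
    thus "V x lam z = 0" using V_def dxs Lz0 by simp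
  qed
  have sq: "\<And>u v :: 'v::real_normed_vector. (norm u)\<^sup>2 \<le> 2 * (norm (u - v))\<^sup>2 + 2 * (norm v)\<^sup>2"
  proof -
    fix u v :: "'v::real_normed_vector"
    have "norm u \<le> norm (u - v) + norm v" by (metis norm_triangle_sub add.commute)
    moreover have "norm u \<ge> 0" by simp
    ultimately have "(norm u)\<^sup>2 \<le> (norm (u - v) + norm v)\<^sup>2" by (simp add: power_mono)
    also have "\<dots> \<le> 2 * (norm (u - v))\<^sup>2 + 2 * (norm v)\<^sup>2"
      using zero_le_power2[of "norm (u - v) - norm v"] by (simp add: power2_sum power2_diff)
    finally show "(norm u)\<^sup>2 \<le> 2 * (norm (u - v))\<^sup>2 + 2 * (norm v)\<^sup>2" .
  qed
  have P3: "\<forall>B. \<exists>R. \<forall>x\<in>Omega. \<forall>lam z. norm (x, lam, z) \<ge> R \<longrightarrow> V x lam z \<ge> B"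
  proof
    fix B
    define C where "C = (norm xs)\<^sup>2 + (norm lams)\<^sup>2 + (norm zs)\<^sup>2"
    have C0: "C \<ge> 0" unfolding C_def by simp
    show "\<exists>R. \<forall>x\<in>Omega. \<forall>lam z. norm (x, lam, z) \<ge> R \<longrightarrow> V x lam z \<ge> B"
    proof (intro exI ballI allI impI)
      fix x :: "real^'N" and lam z :: "real^('n \<times> 'm)" assume xO: "x \<in> Omega" and R: "norm (x, lam, z) \<ge> sqrt (4 * \<bar>B\<bar> + 2 * C)"
      have "(sqrt (4 * \<bar>B\<bar> + 2 * C))\<^sup>2 \<le> (norm (x, lam, z))\<^sup>2"
        using R C0 by (intro power_mono) auto
      hence N: "4 * \<bar>B\<bar> + 2 * C \<le> (norm x)\<^sup>2 + (norm lam)\<^sup>2 + (norm z)\<^sup>2"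
        using C0 by (simp add: norm_Pair)
      have "(norm x)\<^sup>2 + (norm lam)\<^sup>2 + (norm z)\<^sup>2 \<le>
          2 * ((norm (x - xs))\<^sup>2 + (norm (lam - lams))\<^sup>2 + (norm (z - zs))\<^sup>2) + 2 * C"
        unfolding C_def by (rule lin3_aux[OF sq[of x xs] sq[of lam lams] sq[of z zs]])
      from fin_aux[OF N this Vge[OF xO, of lam z]] show "V x lam z \<ge> B" .
    qed
  qed
  show ?thesis using P1 P2 P3 by blast
qed

end
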